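(* For every odd prime $p$ there exists a $\Gamma_p$-equivariant continuous map $f:S(U_1\oplus U_1)\to S(U_p\oplus (p-1)V_1)$. (Here $\dim_{\mathbb{R}}(U_1\oplus U_1)=4p>\dim_{\mathbb{R}}(U_p\oplus(p-1)V_1)=4p-2$, and both representations have no nonzero $\Gamma_p$-fixed vectors.)
   Context: Let $a$ be a fixed generator of $C_p$ and $\xi_p=e^{2\pi\sqrt{-1}/p}$. $\Gamma_p=T^{p-1}\rtimes_\rho C_p$ is the semidirect product with $a t a^{-1}=\rho(a)(t)$, $\rho(a)(t)=(t_{p-1}^{-1},\,t_1t_{p-1}^{-1},\dots,t_{p-2}t_{p-1}^{-1})$ for $t=(t_1,\dots,t_{p-1})$. For $k\in\mathbb{Z}\setminus\{0\}$, $U_k=\mathbb{C}^p$ with coordinates $(z_0,\dots,z_{p-1})$, $a\cdot(z_0,\dots,z_{p-1})=(z_{p-1},z_0,\dots,z_{p-2})$ and $t\cdot(z_0,\dots,z_{p-1})=(t_1^kz_0,\ t_1^{-k}t_2^kz_1,\ \dots,\ t_{p-2}^{-k}t_{p-1}^kz_{p-2},\ t_{p-1}^{-k}z_{p-1})$. $V_1=\mathbb{C}$ with $T^{p-1}$ acting trivially and $a\cdot z=\xi_pz$; $(p-1)V_1$ is the direct sum of $p-1$ copies. $S(\cdot)$ denotes the unit sphere of the underlying real representation. *)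

theory Defs
  imports "HOL-Analysis.Analysis"
begin

text \<open>Vectors of C^n are represented as functions nat => complex whose coordinates
  with index >= n vanish; the topology is the product topology, which on this
  finite-dimensional subspace is the Euclidean one.\<close>

definition xi :: "nat \<Rightarrow> complex" where
  "xi p = cis (2 * pi / real p)"

text \<open>The torus T^(p-1): coordinates t 1, ..., t (p-1) are unit complex numbers;
  the auxiliary coordinates t 0 and t i (i >= p) are fixed to 1 (convention t_0 = t_p = 1).\<close>
definition torus :: "nat \<Rightarrow> (nat \<Rightarrow> complex) set" where
  "torus p = {t. (\<forall>i\<in>{1..p-1}. cmod (t i) = 1) \<and> (\<forall>i. (i = 0 \<or> p \<le> i) \<longrightarrow> t i = 1)}"

text \<open>Action of the element t a^j (t in the torus, 0 <= j < p) of Gamma_p on U_k = C^p: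
  (a^j z)_i = z_{(i-j) mod p}, and t multiplies z_i by t_i^(-k) t_(i+1)^k.\<close>
definition actU :: "nat \<Rightarrow> int \<Rightarrow> (nat \<Rightarrow> complex) \<Rightarrow> nat \<Rightarrow> (nat \<Rightarrow> complex) \<Rightarrow> (nat \<Rightarrow> complex)" where
  "actU p k t j z = (\<lambda>i. if i < p then (t i) powi (-k) * (t (Suc i)) powi k * z ((i + p - j) mod p) else 0)"

text \<open>U_1 + U_1 = C^(2p): coordinates 0..p-1 are the first copy, p..2p-1 the second.\<close>
definition actDom :: "nat \<Rightarrow> (nat \<Rightarrow> complex) \<Rightarrow> nat \<Rightarrow> (nat \<Rightarrow> complex) \<Rightarrow> (nat \<Rightarrow> complex)" where
  "actDom p t j z = (\<lambda>i. if i < p then actU p 1 t j z i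
                          else if i < 2 * p then actU p 1 t j (\<lambda>m. z (m + p)) (i - p)
                          else 0)"

text \<open>U_p + (p-1) V_1 = C^(2p-1): coordinates 0..p-1 are U_p, p..2p-2 the copies of V_1
  (torus acts trivially, a acts by xi_p).\<close>
definition actCod :: "nat \<Rightarrow> (nat \<Rightarrow> complex) \<Rightarrow> nat \<Rightarrow> (nat \<Rightarrow> complex) \<Rightarrow> (nat \<Rightarrow> complex)" where
  "actCod p t j w = (\<lambda>i. if i < p then actU p (int p) t j w i
                          else if i < 2 * p - 1 then (xi p) ^ j * w i
                          else 0)"

definition csphere :: "nat \<Rightarrow> (nat \<Rightarrow> complex) set" where
  "csphere n = {z. (\<forall>i\<ge>n. z i = 0) \<and> (\<Sum>i<n. (cmod (z i))\<^sup>2) = 1}"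

end

theory Submission
  imports Defs "HOL-Library.Real_Mod"
begin

lemma xi_pow_p: "p > 0 \<Longrightarrow> xi p ^ p = 1"
  by (simp add: xi_def Complex.DeMoivre)

lemma xi_norm [simp]: "cmod (xi p) = 1"
  unfolding xi_def by simp

lemma xi_pow_mod: "p > 0 \<Longrightarrow> xi p ^ (k mod p) = xi p ^ k"
proof -
  assume "p > 0"
  have "xi p ^ k = xi p ^ (p * (k div p) + k mod p)" by simp
  also have "\<dots> = (xi p ^ p) ^ (k div p) * xi p ^ (k mod p)"
    by (simp only: power_add power_mult)
  finally show ?thesis using xi_pow_p[OF \<open>p>0\<close>] by simp
qed

lemma xi_pow_ne1:
  assumes "p > 0" "\<not> p dvd k"
  shows "xi p ^ k \<noteq> 1"
proof
  assume "xi p ^ k = 1"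
  moreover have "cis (real k * (2 * pi / real p)) = xi p ^ k" by (simp add: xi_def Complex.DeMoivre)
  ultimately have "cis (real k * (2 * pi / real p)) = 1" by simp
  then obtain n where n: "real k * (2 * pi / real p) = of_int n * (2 * pi)"
    using cis_eq_1_iff by blast
  hence "real k = of_int n * real p" using assms(1)
    by (simp add: field_simps)
  hence "int k = n * int p"
    by (metis of_int_eq_iff of_int_mult of_int_of_nat_eq)
  hence "int p dvd int k" by simp
  thus False using assms(2) by simp
qed

lemma xi_sum:
  assumes "p > 0" "\<not> p dvd k"
  shows "(\<Sum>m<p. (xi p ^ k) ^ m) = 0"
proof -
  have "(xi p ^ k) ^ p = 1"
    by (metis assms(1) mult.commute power_mult power_one xi_pow_p)
  thus ?thesis using geometric_sum[OF xi_pow_ne1[OF assms]] by simp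
qed

definition PZ :: "nat \<Rightarrow> (nat \<Rightarrow> complex) \<Rightarrow> complex" where
  "PZ p z = (\<Prod>i<p. z i)"
definition PW :: "nat \<Rightarrow> (nat \<Rightarrow> complex) \<Rightarrow> complex" where
  "PW p z = (\<Prod>i<p. z (i + p))"
definition FF :: "nat \<Rightarrow> (nat \<Rightarrow> complex) \<Rightarrow> nat \<Rightarrow> complex" where
  "FF p z i = z i ^ p * cnj (PZ p z) + z (i + p) ^ p * cnj (PW p z)"
definition qq :: "nat \<Rightarrow> (nat \<Rightarrow> complex) \<Rightarrow> nat \<Rightarrow> complex" where
  "qq p z i = complex_of_real ((cmod (z i))\<^sup>2) + \<i> * complex_of_real ((cmod (z (i + p)))\<^sup>2)"
definition DF :: "nat \<Rightarrow> (nat \<Rightarrow> complex) \<Rightarrow> nat \<Rightarrow> complex" where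
  "DF p z m = (\<Sum>i<p. xi p ^ (m * i) * qq p z i)"
definition minv :: "nat \<Rightarrow> nat \<Rightarrow> nat" where
  "minv p m = (SOME n. (m * n) mod p = 1)"
definition GG :: "nat \<Rightarrow> (nat \<Rightarrow> complex) \<Rightarrow> nat \<Rightarrow> complex" where
  "GG p z m = DF p z m ^ minv p m"
definition HH :: "nat \<Rightarrow> (nat \<Rightarrow> complex) \<Rightarrow> nat \<Rightarrow> complex" where
  "HH p z = (\<lambda>i. if i < p then FF p z i else if i < 2 * p - 1 then GG p z (i + 1 - p) else 0)"
definition NN :: "nat \<Rightarrow> (nat \<Rightarrow> complex) \<Rightarrow> real" where
  "NN p z = sqrt (\<Sum>i<2 * p - 1. (cmod (HH p z i))\<^sup>2)"
definition ff :: "nat \<Rightarrow> (nat \<Rightarrow> complex) \<Rightarrow> nat \<Rightarrow> complex" where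
  "ff p z = (\<lambda>i. HH p z i / complex_of_real (NN p z))"

lemma minv:
  assumes "prime p" "0 < m" "m < p"
  shows "(m * minv p m) mod p = 1"
proof -
  have "coprime m p"
    using assms by (metis coprime_commute nat_dvd_not_less prime_imp_coprime)
  then obtain x y where "m * x = p * y + gcd m p" using bezout_nat[of m p] assms by auto
  hence "m * x = p * y + 1" using \<open>coprime m p\<close> by simp
  moreover have "p > 1" using assms(1) prime_gt_1_nat by blast
  ultimately have "(m * x) mod p = 1" by (metis mod_mult_self2 mod_less add.commute)
  thus ?thesis unfolding minv_def by (rule someI)
qed

definition cc :: "(nat \<Rightarrow> complex) \<Rightarrow> nat \<Rightarrow> complex" where
  "cc t i = inverse (t i) * t (Suc i)"

lemma torus_norm: "t \<in> torus p \<Longrightarrow> cmod (t i) = 1"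
  unfolding torus_def by (cases "i = 0 \<or> p \<le> i") auto

lemma torus_nz: "t \<in> torus p \<Longrightarrow> t i \<noteq> 0"
  by (metis torus_norm norm_zero zero_neq_one)

lemma cc_norm: "t \<in> torus p \<Longrightarrow> cmod (cc t i) = 1"
  unfolding cc_def by (simp add: norm_mult norm_inverse torus_norm)

lemma prod_cc:
  assumes "t \<in> torus p"
  shows "(\<Prod>i<p. cc t i) = 1"
proof -
  have t0: "t 0 = 1" and tp: "t p = 1" using assms unfolding torus_def by auto
  have "(\<Prod>i<p. cc t i) = (\<Prod>i<p. t (Suc i)) / (\<Prod>i<p. t i)"
    unfolding cc_def using prod_inversef[of t "{..<p}"] by (simp add: prod.distrib divide_inverse mult.commute comp_def)
  also have "(\<Prod>i<p. t (Suc i)) = (\<Prod>i<p. t i)"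
  proof -
    have "(\<Prod>i<Suc p. t i) = t 0 * (\<Prod>i<p. t (Suc i))" by (rule prod.lessThan_Suc_shift)
    moreover have "(\<Prod>i<Suc p. t i) = (\<Prod>i<p. t i) * t p" by simp
    ultimately show ?thesis using t0 tp by simp
  qed
  also have "(\<Prod>i<p. t i) \<noteq> 0" using torus_nz[OF assms] by (simp add: prod_zero_iff)
  ultimately show ?thesis by simp
qed

lemma sig_inv1: "j < (p::nat) \<Longrightarrow> a < p \<Longrightarrow> ((a + p - j) mod p + j) mod p = a"
proof -
  assume "j < p" "a < p"
  have "((a + p - j) mod p + j) mod p = (a + p - j + j) mod p" by (metis mod_add_left_eq)
  also have "\<dots> = (a + p) mod p" using \<open>j<p\<close> by simp
  finally show ?thesis using \<open>a < p\<close> by simp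
qed

lemma sig_inv: "j < (p::nat) \<Longrightarrow> a < p \<Longrightarrow> ((a + j) mod p + p - j) mod p = a"
proof -
  assume "j < p" "a < p"
  have "((a + j) mod p + p - j) mod p = ((a + j) mod p + (p - j)) mod p" using \<open>j<p\<close> by simp
  also have "\<dots> = (a + j + (p - j)) mod p" by (metis mod_add_left_eq)
  also have "\<dots> = (a + p) mod p" using \<open>j<p\<close> by simp
  finally show ?thesis using \<open>a < p\<close> by simp
qed

lemma sig_bij: "j < (p::nat) \<Longrightarrow> bij_betw (\<lambda>i. (i + p - j) mod p) {..<p} {..<p}"
  by (rule bij_betw_byWitness[where f' = "\<lambda>k. (k + j) mod p"]) (auto simp: sig_inv sig_inv1)

lemma sig_bij': "j < (p::nat) \<Longrightarrow> bij_betw (\<lambda>i. (i + j) mod p) {..<p} {..<p}"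
  by (rule bij_betw_byWitness[where f' = "\<lambda>k. (k + p - j) mod p"]) (auto simp: sig_inv sig_inv1)

lemma actDom_lo: "i < p \<Longrightarrow> actDom p t j z i = cc t i * z ((i + p - j) mod p)"
  unfolding actDom_def actU_def cc_def by (simp add: power_int_minus)

lemma actDom_hi: "i < p \<Longrightarrow> actDom p t j z (i + p) = cc t i * z ((i + p - j) mod p + p)"
  unfolding actDom_def actU_def cc_def by (simp add: power_int_minus)

lemma actCod_lo: "i < p \<Longrightarrow> actCod p t j w i = cc t i ^ p * w ((i + p - j) mod p)"
  unfolding actCod_def actU_def cc_def
  by (simp add: power_int_minus power_mult_distrib power_inverse)

lemma actCod_mid: "p \<le> i \<Longrightarrow> i < 2 * p - 1 \<Longrightarrow> actCod p t j w i = xi p ^ j * w i"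
  unfolding actCod_def by simp

lemma actCod_hi: "2 * p - 1 \<le> i \<Longrightarrow> p > 0 \<Longrightarrow> actCod p t j w i = 0"
  unfolding actCod_def by simp

lemma PZ_act:
  assumes "t \<in> torus p" "j < p"
  shows "PZ p (actDom p t j z) = PZ p z"
proof -
  have "PZ p (actDom p t j z) = (\<Prod>i<p. cc t i * z ((i + p - j) mod p))"
    unfolding PZ_def by (rule prod.cong) (auto simp: actDom_lo)
  also have "\<dots> = (\<Prod>i<p. cc t i) * (\<Prod>i<p. z ((i + p - j) mod p))"
    by (rule prod.distrib)
  also have "(\<Prod>i<p. z ((i + p - j) mod p)) = (\<Prod>i<p. z i)"
    using prod.reindex_bij_betw[OF sig_bij[OF assms(2)], of z] .
  finally show ?thesis using prod_cc[OF assms(1)] unfolding PZ_def by simp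
qed

lemma PW_act:
  assumes "t \<in> torus p" "j < p"
  shows "PW p (actDom p t j z) = PW p z"
proof -
  have "PW p (actDom p t j z) = (\<Prod>i<p. cc t i * z ((i + p - j) mod p + p))"
    unfolding PW_def by (rule prod.cong) (auto simp: actDom_hi)
  also have "\<dots> = (\<Prod>i<p. cc t i) * (\<Prod>i<p. z ((i + p - j) mod p + p))"
    by (rule prod.distrib)
  also have "(\<Prod>i<p. z ((i + p - j) mod p + p)) = (\<Prod>i<p. z (i + p))"
    using prod.reindex_bij_betw[OF sig_bij[OF assms(2)], of "\<lambda>i. z (i + p)"] .
  finally show ?thesis using prod_cc[OF assms(1)] unfolding PW_def by simp
qed

lemma FF_act:
  assumes "t \<in> torus p" "j < p" "i < p"
  shows "FF p (actDom p t j z) i = cc t i ^ p * FF p z ((i + p - j) mod p)"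
  unfolding FF_def PZ_act[OF assms(1,2)] PW_act[OF assms(1,2)]
  using assms(3) by (simp add: actDom_lo actDom_hi power_mult_distrib algebra_simps)

lemma qq_act:
  assumes "t \<in> torus p" "i < p"
  shows "qq p (actDom p t j z) i = qq p z ((i + p - j) mod p)"
  unfolding qq_def using assms
  by (simp add: actDom_lo actDom_hi norm_mult cc_norm)

lemma xi_pow_mult_mod:
  assumes "p > 0"
  shows "xi p ^ (m * (k mod p)) = xi p ^ (m * k)"
proof -
  have "xi p ^ (m * (k mod p)) = xi p ^ ((m * (k mod p)) mod p)" using xi_pow_mod[OF assms] by simp
  also have "(m * (k mod p)) mod p = (m * k) mod p" by (simp add: mod_mult_right_eq)
  finally show ?thesis using xi_pow_mod[OF assms] by simp
qed

lemma DF_act: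
  assumes "t \<in> torus p" "j < p"
  shows "DF p (actDom p t j z) m = xi p ^ (m * j) * DF p z m"
proof -
  have p0: "p > 0" using assms by simp
  have "DF p (actDom p t j z) m = (\<Sum>i<p. xi p ^ (m * i) * qq p z ((i + p - j) mod p))"
    unfolding DF_def by (rule sum.cong) (auto simp: qq_act[OF assms(1)])
  also have "\<dots> = (\<Sum>k<p. xi p ^ (m * ((k + j) mod p)) * qq p z (((k + j) mod p + p - j) mod p))"
    using sum.reindex_bij_betw[OF sig_bij'[OF assms(2)], of "\<lambda>i. xi p ^ (m * i) * qq p z ((i + p - j) mod p)"]
    by simp
  also have "\<dots> = (\<Sum>k<p. xi p ^ (m * j) * (xi p ^ (m * k) * qq p z k))"
  proof (rule sum.cong)
    fix k assume k: "k \<in> {..<p}"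
    have "((k + j) mod p + p - j) mod p = k" using sig_inv[OF assms(2)] k by simp
    moreover have "xi p ^ (m * ((k + j) mod p)) = xi p ^ (m * j) * xi p ^ (m * k)"
      by (simp add: xi_pow_mult_mod[OF p0] algebra_simps power_add)
    ultimately show "xi p ^ (m * ((k + j) mod p)) * qq p z (((k + j) mod p + p - j) mod p)
       = xi p ^ (m * j) * (xi p ^ (m * k) * qq p z k)" by simp
  qed simp
  finally show ?thesis unfolding DF_def by (simp add: sum_distrib_left)
qed


lemma GG_act:
  assumes "prime p" "t \<in> torus p" "j < p" "0 < m" "m < p"
  shows "GG p (actDom p t j z) m = xi p ^ j * GG p z m"
proof -
  have p0: "p > 0" using assms by simp
  have "GG p (actDom p t j z) m = xi p ^ (m * j * minv p m) * GG p z m"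
    unfolding GG_def DF_act[OF assms(2,3)] by (simp add: power_mult_distrib power_mult)
  also have "xi p ^ (m * j * minv p m) = xi p ^ j"
  proof -
    have "m * j * minv p m = (m * minv p m) * j" by simp
    hence "(m * j * minv p m) mod p = ((m * minv p m) mod p * j) mod p"
      by (metis mod_mult_left_eq)
    also have "\<dots> = j" using minv[OF assms(1,4,5)] assms(3) by simp
    finally show ?thesis using xi_pow_mod[OF p0, of "m * j * minv p m"] by simp
  qed
  finally show ?thesis .
qed

lemma HH_act:
  assumes "prime p" "t \<in> torus p" "j < p"
  shows "HH p (actDom p t j z) = actCod p t j (HH p z)"
proof
  fix i
  have p0: "p > 0" using assms by simp
  consider "i < p" | "p \<le> i" "i < 2 * p - 1" | "2 * p - 1 \<le> i" by linarith
  thus "HH p (actDom p t j z) i = actCod p t j (HH p z) i"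
  proof cases
    case 1
    have "(i + p - j) mod p < p" using p0 by simp
    thus ?thesis using 1 by (simp add: HH_def actCod_lo FF_act assms)
  next
    case 2
    thus ?thesis by (simp add: HH_def actCod_mid GG_act assms)
  next
    case 3
    thus ?thesis using p0 by (simp add: HH_def actCod_hi)
  qed
qed

lemma norm_actCod:
  assumes "t \<in> torus p" "j < p"
  shows "(\<Sum>i<2 * p - 1. (cmod (actCod p t j w i))\<^sup>2) = (\<Sum>i<2 * p - 1. (cmod (w i))\<^sup>2)"
proof -
  have p0: "p > 0" using assms by simp
  have split: "(\<Sum>i<2 * p - 1. g i) = (\<Sum>i<p. g i) + (\<Sum>i=p..<2 * p - 1. g i)" for g :: "nat \<Rightarrow> real"
    using sum.atLeastLessThan_concat[of 0 p "2 * p - 1" g] p0 by (simp add: atLeast0LessThan)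
  have "(\<Sum>i<p. (cmod (actCod p t j w i))\<^sup>2) = (\<Sum>i<p. (cmod (w ((i + p - j) mod p)))\<^sup>2)"
    by (rule sum.cong) (auto simp: actCod_lo norm_mult norm_power cc_norm[OF assms(1)] assms)
  also have "\<dots> = (\<Sum>i<p. (cmod (w i))\<^sup>2)"
    using sum.reindex_bij_betw[OF sig_bij[OF assms(2)], of "\<lambda>i. (cmod (w i))\<^sup>2"] .
  finally have A: "(\<Sum>i<p. (cmod (actCod p t j w i))\<^sup>2) = (\<Sum>i<p. (cmod (w i))\<^sup>2)" .
  have B: "(\<Sum>i=p..<2 * p - 1. (cmod (actCod p t j w i))\<^sup>2) = (\<Sum>i=p..<2 * p - 1. (cmod (w i))\<^sup>2)"
    by (rule sum.cong) (auto simp: actCod_mid norm_mult norm_power)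
  show ?thesis unfolding split A B ..
qed

lemma actCod_div: "actCod p t j (\<lambda>i. w i / a) = (\<lambda>i. actCod p t j w i / a)"
  unfolding actCod_def actU_def by (auto simp: fun_eq_iff)

lemma ff_act:
  assumes "prime p" "t \<in> torus p" "j < p"
  shows "ff p (actDom p t j z) = actCod p t j (ff p z)"
proof -
  have "NN p (actDom p t j z) = NN p z"
    unfolding NN_def HH_act[OF assms] norm_actCod[OF assms(2,3)] ..
  thus ?thesis unfolding ff_def HH_act[OF assms] actCod_div by simp
qed


lemma not_dvd_shift:
  assumes "i < (p::nat)" "l < p" "i \<noteq> l"
  shows "\<not> p dvd (i + p - l)"
proof
  assume "p dvd (i + p - l)"
  then obtain c where c: "i + p - l = p * c" by blast
  have "p * c < p * 2" using c assms by linarith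
  hence "c < 2" by simp
  hence "c = 0 \<or> c = 1" by linarith
  thus False using c assms by auto
qed

lemma inner_sum:
  assumes "i < p" "l < p"
  shows "(\<Sum>m<p. (xi p ^ (i + p - l)) ^ m) = (if i = l then of_nat p else 0)"
proof (cases "i = l")
  case True
  have "p > 0" using assms by simp
  thus ?thesis using True xi_pow_p by simp
next
  case False
  thus ?thesis using xi_sum[of p "i + p - l"] not_dvd_shift[OF assms False] assms by simp
qed

lemma DF_zero_const:
  assumes "\<forall>m. 0 < m \<and> m < p \<longrightarrow> DF p z m = 0" "l < p"
  shows "qq p z l = qq p z 0"
proof -
  have p0: "p > 0" using assms by simp
  have key: "(\<Sum>m<p. xi p ^ (m * (p - l')) * DF p z m) = of_nat p * qq p z l'" if l': "l' < p" for l'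
  proof -
    have e: "xi p ^ (m * (p - l')) * (xi p ^ (m * i) * q) = q * (xi p ^ (i + p - l')) ^ m"
      if "i < p" for m i q
    proof -
      have "m * (p - l') + m * i = (i + p - l') * m" using l' by (simp add: algebra_simps)
      thus ?thesis by (simp add: power_add[symmetric] power_mult[symmetric] algebra_simps)
    qed
    have "(\<Sum>m<p. xi p ^ (m * (p - l')) * DF p z m)
        = (\<Sum>m<p. \<Sum>i<p. qq p z i * (xi p ^ (i + p - l')) ^ m)"
      unfolding DF_def sum_distrib_left by (rule sum.cong, simp, rule sum.cong, auto simp: e)
    also have "\<dots> = (\<Sum>i<p. \<Sum>m<p. qq p z i * (xi p ^ (i + p - l')) ^ m)"
      by (rule sum.swap)
    also have "\<dots> = (\<Sum>i<p. qq p z i * (if i = l' then of_nat p else 0))"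
      unfolding sum_distrib_left[symmetric] by (rule sum.cong) (auto simp: inner_sum l')
    also have "\<dots> = of_nat p * qq p z l'"
      using l' by (simp add: if_distrib sum.delta mult.commute cong: if_cong)
    finally show ?thesis .
  qed
  have red: "(\<Sum>m<p. xi p ^ (m * (p - l')) * DF p z m) = DF p z 0" for l'
  proof -
    have "(\<Sum>m<p. xi p ^ (m * (p - l')) * DF p z m)
        = xi p ^ (0 * (p - l')) * DF p z 0 + (\<Sum>m\<in>{..<p} - {0}. xi p ^ (m * (p - l')) * DF p z m)"
      using p0 by (subst sum.remove[of _ 0]) auto
    also have "(\<Sum>m\<in>{..<p} - {0}. xi p ^ (m * (p - l')) * DF p z m) = 0"
      using assms(1) by (intro sum.neutral) auto
    finally show ?thesis by simp
  qed
  have "of_nat p * qq p z l = of_nat p * qq p z 0"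
    using key[OF assms(2)] key[OF p0] red by metis
  thus ?thesis using p0 by simp
qed


lemma sum_2p: "(\<Sum>i<2 * p. g i) = (\<Sum>i<p. g i) + (\<Sum>i<p. g (i + p))" for g :: "nat \<Rightarrow> real"
proof -
  have "(\<Sum>i<2 * p. g i) = (\<Sum>i<p. g i) + (\<Sum>i=p..<p + p. g i)"
    using sum.atLeastLessThan_concat[of 0 p "p + p" g] by (simp add: atLeast0LessThan mult_2)
  also have "(\<Sum>i=p..<p + p. g i) = (\<Sum>i<p. g (i + p))"
    using sum.shift_bounds_nat_ivl[of g 0 p p] by (simp add: atLeast0LessThan)
  finally show ?thesis .
qed

lemma HH_nz:
  assumes "prime p" "odd p" "z \<in> csphere (2 * p)"
  shows "\<exists>i<2 * p - 1. HH p z i \<noteq> 0"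
proof (rule ccontr)
  assume "\<not> (\<exists>i<2 * p - 1. HH p z i \<noteq> 0)"
  hence all: "\<And>i. i < 2 * p - 1 \<Longrightarrow> HH p z i = 0" by blast
  have p1: "p > 1" using assms(1) prime_gt_1_nat by blast
  have F: "FF p z i = 0" if "i < p" for i
    using all[of i] that unfolding HH_def by (simp split: if_splits)
  have G: "\<forall>m. 0 < m \<and> m < p \<longrightarrow> DF p z m = 0"
  proof (intro allI impI)
    fix m assume m: "0 < m \<and> m < p"
    have "m + p - 1 < 2 * p - 1" using m by linarith
    hence "HH p z (m + p - 1) = 0" using all by blast
    moreover have "\<not> m + p - 1 < p" "m + p - 1 + 1 - p = m" using m by auto
    ultimately have "GG p z m = 0" using \<open>m + p - 1 < 2 * p - 1\<close> unfolding HH_def by simp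
    thus "DF p z m = 0" unfolding GG_def by simp
  qed
  have Q: "qq p z l = qq p z 0" if "l < p" for l using DF_zero_const[OF G that] .
  have QA: "cmod (z l) = cmod (z 0)" if "l < p" for l
  proof -
    have "Re (qq p z l) = Re (qq p z 0)" using Q[OF that] by simp
    hence "(cmod (z l))\<^sup>2 = (cmod (z 0))\<^sup>2" unfolding qq_def by simp
    thus ?thesis by (simp add: power2_eq_iff_nonneg)
  qed
  have QB: "cmod (z (l + p)) = cmod (z p)" if "l < p" for l
  proof -
    have "Im (qq p z l) = Im (qq p z 0)" using Q[OF that] by simp
    hence "(cmod (z (l + p)))\<^sup>2 = (cmod (z p))\<^sup>2" unfolding qq_def by simp
    thus ?thesis by (simp add: power2_eq_iff_nonneg)
  qed
  have zA: "\<forall>i<p. z i = 0" if hz: "PZ p z = 0"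
  proof -
    obtain j where "j < p" "z j = 0" using hz unfolding PZ_def by (auto simp: prod_zero_iff)
    thus ?thesis using QA by (metis norm_eq_zero)
  qed
  have zB: "\<forall>i<p. z (i + p) = 0" if hw: "PW p z = 0"
  proof -
    obtain j where "j < p" "z (j + p) = 0" using hw unfolding PW_def by (auto simp: prod_zero_iff)
    thus ?thesis using QB by (metis norm_eq_zero)
  qed
  have nA: "z 0 \<noteq> 0" if "PZ p z \<noteq> 0"
    using that p1 unfolding PZ_def by (auto simp: prod_zero_iff)
  have nB: "z p \<noteq> 0" if "PW p z \<noteq> 0"
    using that p1 unfolding PW_def by (metis add_0 finite_lessThan lessThan_iff
      less_trans zero_less_one prod_zero_iff)
  have sph: "(\<Sum>i<2 * p. (cmod (z i))\<^sup>2) = 1" using assms(3) unfolding csphere_def by simp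
  have F0: "z 0 ^ p * cnj (PZ p z) + z p ^ p * cnj (PW p z) = 0"
    using F[of 0] p1 unfolding FF_def by simp
  show False
  proof (cases "PZ p z = 0")
    case True
    note zA' = zA[OF True]
    show False
    proof (cases "PW p z = 0")
      case True
      have "(\<Sum>i<2 * p. (cmod (z i))\<^sup>2) = 0"
        unfolding sum_2p using zA' zB[OF True] by simp
      thus False using sph by simp
    next
      case False
      thus False using F0 \<open>PZ p z = 0\<close> nB[OF False] by simp
    qed
  next
    case False
    note nzA = False
    show False
    proof (cases "PW p z = 0")
      case True
      thus False using F0 nzA nA[OF nzA] by simp
    next
      case False
      have eq: "z i ^ p * cnj (PZ p z) = - (z (i + p) ^ p * cnj (PW p z))" if "i < p" for i
        using F[OF that] unfolding FF_def by (simp add: eq_neg_iff_add_eq_0)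
      have "(\<Prod>i<p. z i ^ p * cnj (PZ p z)) = (\<Prod>i<p. - (z (i + p) ^ p * cnj (PW p z)))"
        using eq by (intro prod.cong) auto
      hence "PZ p z ^ p * cnj (PZ p z) ^ p = (-1) ^ p * (PW p z ^ p * cnj (PW p z) ^ p)"
        unfolding PZ_def PW_def
        by (simp add: prod.distrib prod_power_distrib[symmetric] prod_uminus)
      hence "(PZ p z * cnj (PZ p z)) ^ p = - ((PW p z * cnj (PW p z)) ^ p)"
        using assms(2) by (simp add: power_mult_distrib)
      hence "complex_of_real ((cmod (PZ p z))\<^sup>2 ^ p) = - complex_of_real ((cmod (PW p z))\<^sup>2 ^ p)"
        by (metis complex_norm_square of_real_power)
      hence r: "(cmod (PZ p z))\<^sup>2 ^ p = - ((cmod (PW p z))\<^sup>2 ^ p)"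
        by (metis of_real_eq_iff of_real_minus)
      have "(cmod (PZ p z))\<^sup>2 ^ p > 0" using nzA by simp
      moreover have "(cmod (PW p z))\<^sup>2 ^ p > 0" using False by simp
      ultimately show False using r by linarith
    qed
  qed
qed


lemma cont_coord [continuous_intros]: "continuous_on S (\<lambda>x::nat \<Rightarrow> complex. x i)"
  by (rule continuous_on_subset[OF continuous_on_product_coordinates subset_UNIV])

lemma cont_HH: "continuous_on S (\<lambda>z. HH p z i)"
proof -
  consider "i < p" | "\<not> i < p" "i < 2 * p - 1" | "\<not> i < 2 * p - 1" by blast
  thus ?thesis
  proof cases
    case 1
    thus ?thesis unfolding HH_def FF_def PZ_def PW_def by simp (intro continuous_intros)
  next
    case 2
    thus ?thesis unfolding HH_def GG_def DF_def qq_def by simp (intro continuous_intros)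
  next
    case 3
    hence "\<not> i < p" by arith
    thus ?thesis using 3 unfolding HH_def by simp
  qed
qed

lemma cont_NN: "continuous_on S (NN p)"
  unfolding NN_def by (intro continuous_intros cont_HH)

lemma NN_pos:
  assumes "prime p" "odd p" "z \<in> csphere (2 * p)"
  shows "NN p z > 0"
proof -
  obtain i where i: "i < 2 * p - 1" "HH p z i \<noteq> 0" using HH_nz[OF assms] by blast
  have "0 < (cmod (HH p z i))\<^sup>2" using i by simp
  also have "\<dots> \<le> (\<Sum>i<2 * p - 1. (cmod (HH p z i))\<^sup>2)"
    using i by (intro member_le_sum) auto
  finally show ?thesis unfolding NN_def by simp
qed

theorem mainTheorem12:
  fixes p :: nat
  assumes "prime p" and "odd p"
  shows "\<exists>f :: (nat \<Rightarrow> complex) \<Rightarrow> (nat \<Rightarrow> complex).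
           continuous_on (csphere (2 * p)) f \<and>
           f ` csphere (2 * p) \<subseteq> csphere (2 * p - 1) \<and>
           (\<forall>t\<in>torus p. \<forall>j<p. \<forall>z\<in>csphere (2 * p).
               f (actDom p t j z) = actCod p t j (f z))"
proof (intro exI[of _ "ff p"] conjI ballI allI impI)
  show "continuous_on (csphere (2 * p)) (ff p)"
  proof (rule continuous_on_coordinatewise_then_product)
    fix i
    have c: "continuous_on (csphere (2 * p)) (\<lambda>z. complex_of_real (NN p z))"
      using cont_NN by simp
    have nz: "\<forall>z\<in>csphere (2 * p). complex_of_real (NN p z) \<noteq> 0"
      using NN_pos[OF assms] by fastforce
    show "continuous_on (csphere (2 * p)) (\<lambda>z. ff p z i)"
      unfolding ff_def using continuous_on_divide[OF cont_HH c nz] .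
  qed
  show "ff p ` csphere (2 * p) \<subseteq> csphere (2 * p - 1)"
  proof
    fix w assume "w \<in> ff p ` csphere (2 * p)"
    then obtain z where z: "z \<in> csphere (2 * p)" "w = ff p z" by blast
    have N: "NN p z > 0" using NN_pos[OF assms z(1)] .
    have "(\<Sum>i<2 * p - 1. (cmod (w i))\<^sup>2) = (\<Sum>i<2 * p - 1. (cmod (HH p z i))\<^sup>2) / (NN p z)\<^sup>2"
      unfolding z(2) ff_def using N
      by (simp add: norm_divide power_divide sum_divide_distrib)
    also have "(NN p z)\<^sup>2 = (\<Sum>i<2 * p - 1. (cmod (HH p z i))\<^sup>2)"
      unfolding NN_def by (simp add: sum_nonneg)
    finally have "(\<Sum>i<2 * p - 1. (cmod (w i))\<^sup>2) = 1" using N unfolding NN_def by simp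
    moreover have "\<forall>i\<ge>2 * p - 1. w i = 0" unfolding z(2) ff_def HH_def by auto
    ultimately show "w \<in> csphere (2 * p - 1)" unfolding csphere_def by simp
  qed
  fix t j z assume "t \<in> torus p" "j < p"
  thus "ff p (actDom p t j z) = actCod p t j (ff p z)" using ff_act[OF assms(1)] by simp
qed

end
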